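(* Let $1\le k\le n/2$, $\gamma=k/n$, $\varepsilon\in[0,1]$, let $g\colon\{0,1\}^m\to\{0,1\}^n$ be a $d$-local function, and let $\mathcal{P}_g=g(\mathcal{U}^m)$. Suppose there are $r'\ge1$ non-connected neighborhoods $N_g(i_1),\dots,N_g(i_{r'})$ each of which is Type-1, i.e., for each $a$, with $s_a=|N_g(i_a)|$, the marginal $\mathcal{P}_g|_{N_g(i_a)}$ has total variation distance more than $\varepsilon$ from $\mathcal{U}^{s_a}_\gamma$. Then $$\|\mathcal{P}_g-\mathcal{D}_k\|\ge 1-2\sqrt{2n}\cdot\exp\{-\varepsilon^2 r'/2\}.$$
   Context: $\mathcal{U}^m$ is uniform on $\{0,1\}^m$; $\mathcal{U}^s_\gamma$ is the product distribution on $\{0,1\}^s$ with each bit $1$ independently with probability $\gamma$; $\mathcal{D}_k$ is uniform on strings in $\{0,1\}^n$ of Hamming weight $k$. $\mathcal{P}|_T$ denotes the marginal of $\mathcal{P}$ on coordinates $T$. A function $g$ is $d$-local if each output bit depends on at most $d$ input bits; $I_g(i)$ is the set of input coordinates on which output $i$ depends; $N_g(i)=\{j: I_g(j)\cap I_g(i)\neq\emptyset\}$. Neighborhoods $N_g(i_1),\dots,N_g(i_{r'})$ are non-connected if the sets $\bigcup_{j\in N_g(i_a)}I_g(j)$ are pairwise disjoint. $\|\cdot\|$ is total variation distance. *)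

theory Defs
  imports "HOL-Probability.Probability"
begin

text \<open>Bit strings of length n are boolean lists of length n; True = bit 1.\<close>

definition bitstrings :: "nat \<Rightarrow> bool list set" where
  "bitstrings n = {xs. length xs = n}"

definition unif_bits :: "nat \<Rightarrow> bool list pmf" where
  "unif_bits m = pmf_of_set (bitstrings m)"

definition D_weight :: "nat \<Rightarrow> nat \<Rightarrow> bool list pmf" where
  "D_weight n k = pmf_of_set {xs \<in> bitstrings n. count_list xs True = k}"

definition tv_dist :: "'a pmf \<Rightarrow> 'a pmf \<Rightarrow> real" where
  "tv_dist p q = (SUP A. \<bar>measure_pmf.prob p A - measure_pmf.prob q A\<bar>)"

definition marginal :: "bool list pmf \<Rightarrow> nat set \<Rightarrow> (nat \<Rightarrow> bool) pmf" where
  "marginal P T = map_pmf (\<lambda>xs j. if j \<in> T then xs ! j else False) P"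

definition biased_bits :: "nat set \<Rightarrow> real \<Rightarrow> (nat \<Rightarrow> bool) pmf" where
  "biased_bits T \<gamma> = Pi_pmf T False (\<lambda>_. bernoulli_pmf \<gamma>)"

definition dep_set :: "(bool list \<Rightarrow> bool list) \<Rightarrow> nat \<Rightarrow> nat \<Rightarrow> nat set" where
  "dep_set g m i = {j. j < m \<and> (\<exists>x \<in> bitstrings m. g x ! i \<noteq> g (x[j := \<not> x ! j]) ! i)}"

definition is_local :: "(bool list \<Rightarrow> bool list) \<Rightarrow> nat \<Rightarrow> nat \<Rightarrow> nat \<Rightarrow> bool" where
  "is_local g m n d \<longleftrightarrow> (\<forall>i<n. card (dep_set g m i) \<le> d)"

definition nbhd :: "(bool list \<Rightarrow> bool list) \<Rightarrow> nat \<Rightarrow> nat \<Rightarrow> nat \<Rightarrow> nat set" where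
  "nbhd g m n i = {j. j < n \<and> dep_set g m j \<inter> dep_set g m i \<noteq> {}}"

definition nbhd_inputs :: "(bool list \<Rightarrow> bool list) \<Rightarrow> nat \<Rightarrow> nat \<Rightarrow> nat \<Rightarrow> nat set" where
  "nbhd_inputs g m n i = (\<Union>j \<in> nbhd g m n i. dep_set g m j)"

end

theory Submission
  imports Defs
begin



lemma e_step:
  fixes j :: nat assumes "j \<ge> 1"
  shows "(1 + 1 / real j) ^ j \<le> (1 + 1 / real (Suc j)) ^ Suc j"
proof -
  have jp: "real j > 0" using assms by simp
  have "1 + real (Suc j) * (- 1 / (real (Suc j))^2) \<le> (1 + (- 1 / (real (Suc j))^2)) ^ Suc j"
    by (rule Bernoulli_inequality) (simp add: field_simps)
  moreover have "real (Suc j) * (- 1 / (real (Suc j))^2) = - 1 / real (Suc j)"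
    by (simp add: power2_eq_square)
  ultimately have b: "1 - 1 / real (Suc j) \<le> (1 - 1 / (real (Suc j))^2) ^ Suc j"
    by simp
  have eq1: "1 - 1 / real (Suc j) = real j / real (Suc j)" by (simp add: field_simps)
  have eq2: "1 - 1 / (real (Suc j))^2 = (real j * real (Suc (Suc j))) / (real (Suc j))^2"
  proof -
    have "real j * real (Suc (Suc j)) = (real (Suc j))^2 - 1" by (simp add: power2_eq_square algebra_simps)
    thus ?thesis by (simp add: diff_divide_distrib)
  qed
  have "(1 + 1 / real j) ^ j = (real (Suc j) / real j) ^ j" using jp by (simp add: field_simps)
  also have "\<dots> = (real (Suc j) / real j) ^ Suc j * (real j / real (Suc j))"
  proof -
    have h: "(real (Suc j) / real j) * (real j / real (Suc j)) = 1" using jp by simp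
    have "(real (Suc j) / real j) ^ Suc j * (real j / real (Suc j))
        = (real (Suc j) / real j) ^ j * ((real (Suc j) / real j) * (real j / real (Suc j)))"
      by (simp only: power_Suc mult_ac)
    thus ?thesis using h by simp
  qed
  also have "\<dots> \<le> (real (Suc j) / real j) ^ Suc j * ((real j * real (Suc (Suc j))) / (real (Suc j))^2) ^ Suc j"
    using b eq1 eq2 by (intro mult_left_mono) auto
  also have "\<dots> = (real (Suc (Suc j)) / real (Suc j)) ^ Suc j"
    unfolding power_mult_distrib[symmetric]
  proof (intro arg_cong[where f="\<lambda>x. x ^ Suc j"])
    have "\<And>x y. (x::real) > 0 \<Longrightarrow> x / real j * (real j * y / x^2) = y / x"
      using jp by (simp add: power2_eq_square)
    thus "real (Suc j) / real j * (real j * real (Suc (Suc j)) / (real (Suc j))\<^sup>2) = real (Suc (Suc j)) / real (Suc j)"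
      by (metis of_nat_0_less_iff zero_less_Suc)
  qed
  also have "\<dots> = (1 + 1 / real (Suc j)) ^ Suc j" by (simp add: field_simps)
  finally show ?thesis .
qed

lemma e_mono:
  fixes K N :: nat assumes "1 \<le> K" "K \<le> N"
  shows "(1 + 1 / real K) ^ K \<le> (1 + 1 / real N) ^ N"
  using assms(2)
proof (induction N rule: dec_induct)
  case base then show ?case by simp
next
  case (step N)
  then show ?case using e_step[of N] assms by simp
qed

definition bb :: "nat \<Rightarrow> nat \<Rightarrow> real" where
  "bb N K = real (N choose K) * real K ^ K * real (N - K) ^ (N - K) / real N ^ N"

lemma bb_diag:
  assumes "1 \<le> K" "K \<le> N"
  shows "bb (Suc N) (Suc K) \<le> bb N K"
proof -
  have Kp: "real K > 0" and Np: "real N > 0" using assms by auto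
  have c: "real (Suc N choose Suc K) * real (Suc K) = real (N choose K) * real (Suc N)"
    by (metis Suc_times_binomial_eq mult.commute of_nat_mult)
  have "bb (Suc N) (Suc K) = real (Suc N choose Suc K) * real (Suc K) * real (Suc K) ^ K * real (N - K) ^ (N - K) / real (Suc N) ^ Suc N"
    unfolding bb_def by (simp add: algebra_simps)
  also have "\<dots> = real (N choose K) * real (Suc K) ^ K * real (N - K) ^ (N - K) * (real (Suc N) / real (Suc N) ^ Suc N)"
    unfolding c by (simp add: mult_ac)
  also have "real (Suc N) / real (Suc N) ^ Suc N = 1 / real (Suc N) ^ N"
    by (simp del: of_nat_Suc)
  also have "real (N choose K) * real (Suc K) ^ K * real (N - K) ^ (N - K) * (1 / real (Suc N) ^ N)
     = real (N choose K) * real (Suc K) ^ K * real (N - K) ^ (N - K) / real (Suc N) ^ N" by simp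
  also have "\<dots> \<le> bb N K"
  proof -
    have "(1 + 1 / real K) ^ K \<le> (1 + 1 / real N) ^ N" by (rule e_mono[OF assms])
    hence "(real (Suc K) / real K) ^ K \<le> (real (Suc N) / real N) ^ N"
      using Kp Np by (simp add: field_simps)
    hence i: "real (Suc K) ^ K * real N ^ N \<le> real K ^ K * real (Suc N) ^ N"
      using Kp Np by (simp add: power_divide divide_le_eq le_divide_eq field_simps)
    have "real (Suc K) ^ K / real (Suc N) ^ N \<le> real K ^ K / real N ^ N"
      using i Kp Np by (simp add: divide_le_eq le_divide_eq field_simps)
    hence "real (N choose K) * real (N - K) ^ (N - K) * (real (Suc K) ^ K / real (Suc N) ^ N)
        \<le> real (N choose K) * real (N - K) ^ (N - K) * (real K ^ K / real N ^ N)"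
      by (intro mult_left_mono) auto
    thus ?thesis unfolding bb_def by (simp add: field_simps)
  qed
  finally show ?thesis .
qed

lemma bbc: "bb (2*K) K = real (2*K choose K) / 4 ^ K"
proof (cases "K = 0")
  case True thus ?thesis by (simp add: bb_def)
next
  case False
  have a: "real (2*K - K) = real K" by simp
  have b: "real (2*K) ^ (2*K) = 4 ^ K * (real K ^ K * real K ^ K)"
    by (simp add: power_mult_distrib power_mult power_add[symmetric] mult_2[symmetric])
  have "bb (2*K) K = real (2*K choose K) * (real K ^ K * real K ^ K) / (4 ^ K * (real K ^ K * real K ^ K))"
    unfolding bb_def a b by (simp add: mult.assoc)
  also have "\<dots> = real (2*K choose K) / 4 ^ K" using False by simp
  finally show ?thesis .
qed

lemma central:
  assumes "1 \<le> K"
  shows "4 * real K * (bb (2*K) K)^2 \<ge> 1"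
  using assms
proof (induction K rule: dec_induct)
  case base then show ?case by (simp add: bb_def power2_eq_square)
next
  case (step K)
  have Kp: "real K > 0" using step by simp
  have e2: "2*Suc K = Suc (Suc (2*K))" by simp
  have r1: "(2*Suc K choose Suc K) * Suc K = Suc (Suc (2*K)) * (Suc (2*K) choose K)"
    unfolding e2 by (rule Suc_times_binomial_eq[symmetric])
  have e3: "Suc (2*K) - K = Suc K" by simp
  have r2: "(Suc (2*K) choose K) * Suc K = Suc (2*K) * (2*K choose K)"
    using binomial_absorb_comp[of "Suc (2*K)" K] unfolding e3 by (simp only: mult.commute diff_Suc_1)
  have idn: "(2*Suc K choose Suc K) * Suc K * Suc K = Suc (Suc (2*K)) * (Suc (2*K) * (2*K choose K))"
    unfolding r1 mult.assoc r2 ..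
  have idr: "real (2*Suc K choose Suc K) * real (Suc K) * real (Suc K) = real (Suc (Suc (2*K))) * (real (Suc (2*K)) * real (2*K choose K))"
    using arg_cong[OF idn, of real] by (simp only: of_nat_mult)
  have ss: "real (Suc (Suc (2*K))) = 2 * real (Suc K)" by simp
  have ceq: "real (2*Suc K choose Suc K) = 2 * real (Suc (2*K)) * real (2*K choose K) / real (Suc K)"
  proof -
    have g: "\<And>X s a C::real. s > 0 \<Longrightarrow> X * s * s = (2 * s) * (a * C) \<Longrightarrow> X = 2 * a * C / s"
      by (simp add: field_simps)
    show ?thesis by (rule g[OF _ idr[unfolded ss]]) simp
  qed
  define c where "c = bb (2*K) K"
  have bbK: "c = real (2*K choose K) / 4 ^ K" unfolding c_def by (rule bbc)
  have bbS: "bb (2*Suc K) (Suc K) = real (2*Suc K choose Suc K) / 4 ^ Suc K" by (rule bbc)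
  have gen: "\<And>a C b F::real. b > 0 \<Longrightarrow> F > 0 \<Longrightarrow> (2*a*C/b)/(4*F) = (C/F)*(a/(2*b))"
    by (simp add: field_simps)
  have rec: "bb (2*Suc K) (Suc K) = c * (real (Suc (2*K)) / (2 * real (Suc K)))"
    unfolding bbS ceq bbK power_Suc by (rule gen) auto
  have X: "c^2 \<ge> 1 / (4 * real K)" using step.IH Kp unfolding c_def by (simp add: field_simps)
  have "4 * real (Suc K) * (bb (2*Suc K) (Suc K))^2 = ((real (Suc (2*K)))^2 / real (Suc K)) * c^2"
  proof -
    have g: "\<And>s a c::real. s > 0 \<Longrightarrow> 4 * s * (c * (a / (2 * s)))^2 = (a^2 / s) * c^2"
      by (simp add: field_simps power2_eq_square)
    show ?thesis unfolding rec by (rule g) simp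
  qed
  also have "\<dots> \<ge> ((real (Suc (2*K)))^2 / real (Suc K)) * (1 / (4 * real K))"
    by (intro mult_left_mono X) auto
  finally have "4 * real (Suc K) * (bb (2*Suc K) (Suc K))^2 \<ge> (real (Suc (2*K)))^2 / real (Suc K) * (1 / (4 * real K))" .
  moreover have "(real (Suc (2*K)))^2 / real (Suc K) * (1 / (4 * real K)) \<ge> 1"
  proof -
    have g: "(2*x+1)^2 / (x+1) * (1 / (4 * x)) \<ge> 1" if x: "x > 0" for x :: real
    proof -
      have p: "4*x*(x+1) > 0" using x by simp
      have "(2*x+1)^2 / (x+1) * (1 / (4 * x)) = (2*x+1)^2 / (4*x*(x+1))" by (simp add: field_simps)
      also have "\<dots> \<ge> 1" using p by (subst le_divide_eq) (auto simp: power2_eq_square algebra_simps)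
      finally show ?thesis .
    qed
    show ?thesis using g[OF Kp] by (simp add: add.commute)
  qed
  ultimately show ?case by linarith
qed

lemma bb_nonneg: "bb N K \<ge> 0" unfolding bb_def by simp

lemma walk:
  assumes "1 \<le> K"
  shows "bb (2*K + d) K \<ge> 1 / (2 * sqrt (real (K + d)))"
  using assms
proof (induction d arbitrary: K)
  case 0
  have "4 * real K * (bb (2*K) K)^2 \<ge> 1" by (rule central[OF 0])
  hence "(2 * sqrt (real K) * bb (2*K) K)^2 \<ge> 1"
    by (simp add: power_mult_distrib)
  hence "2 * sqrt (real K) * bb (2*K) K \<ge> 1"
    using bb_nonneg power2_le_imp_le[of 1 "2 * sqrt (real K) * bb (2*K) K"] by simp
  thus ?case using 0 by (simp add: field_simps)
next
  case (Suc d)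
  have "bb (Suc (2*K + Suc d)) (Suc K) \<le> bb (2*K + Suc d) K"
    using bb_diag[of K "2*K+Suc d"] Suc.prems by linarith
  moreover have "Suc (2*K + Suc d) = 2 * Suc K + d" by simp
  moreover have "Suc K + d = K + Suc d" by simp
  moreover have "bb (2 * Suc K + d) (Suc K) \<ge> 1 / (2 * sqrt (real (Suc K + d)))"
    using Suc.IH[of "Suc K"] by simp
  ultimately show ?case by (metis order_trans)
qed

lemma binom_lb:
  assumes "1 \<le> k" "2 * k \<le> n"
  shows "pmf (binomial_pmf n (real k / real n)) k \<ge> 1 / (2 * sqrt (real n))"
proof -
  have np: "real n > 0" using assms by simp
  have "pmf (binomial_pmf n (real k / real n)) k = bb n k"
  proof -
    have p01: "real k / real n \<in> {0..1}" using assms np by auto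
    have d: "1 - real k / real n = real (n - k) / real n" using assms np by (simp add: of_nat_diff field_simps)
    have pw: "real n ^ k * real n ^ (n - k) = real n ^ n"
      using assms by (simp add: power_add[symmetric])
    have "pmf (binomial_pmf n (real k / real n)) k = real (n choose k) * (real k / real n) ^ k * (real (n - k) / real n) ^ (n - k)"
      using p01 d by (simp add: pmf_binomial)
    also have "\<dots> = real (n choose k) * real k ^ k * real (n - k) ^ (n - k) / (real n ^ k * real n ^ (n - k))"
      by (simp add: power_divide)
    also have "\<dots> = bb n k" unfolding pw bb_def ..
    finally show ?thesis .
  qed
  moreover have "bb n k \<ge> 1 / (2 * sqrt (real (k + (n - 2*k))))"
    using walk[of k "n - 2*k"] assms by simp
  moreover have "1 / (2 * sqrt (real (k + (n - 2*k)))) \<ge> 1 / (2 * sqrt (real n))"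
    using assms by (intro divide_left_mono mult_left_mono) auto
  ultimately show ?thesis by linarith
qed



lemma mask_meas:
  assumes "finite K"
  shows "(\<lambda>z i. if i \<in> K then z i else False) \<in>
     measurable (PiM K (\<lambda>_. count_space (UNIV::bool set))) (count_space (PiE_dflt K False (\<lambda>_. UNIV)))"
proof (subst measurable_count_space_eq2)
  show "finite (PiE_dflt K False (\<lambda>_. UNIV::bool set))" using assms by auto
  show "(\<lambda>z i. if i \<in> K then z i else False) \<in> space (PiM K (\<lambda>_. count_space UNIV)) \<rightarrow> PiE_dflt K False (\<lambda>_. UNIV) \<and>
    (\<forall>a\<in>PiE_dflt K False (\<lambda>_. UNIV).
        (\<lambda>z i. if i \<in> K then z i else False) -` {a} \<inter> space (PiM K (\<lambda>_. count_space UNIV)) \<in> sets (PiM K (\<lambda>_. count_space UNIV)))"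
  proof (intro conjI ballI)
    show "(\<lambda>z i. if i \<in> K then z i else False) \<in> space (PiM K (\<lambda>_. count_space UNIV)) \<rightarrow> PiE_dflt K False (\<lambda>_. UNIV)"
      by (auto simp: PiE_dflt_def)
  next
    fix f assume f: "f \<in> PiE_dflt K False (\<lambda>_. UNIV::bool set)"
    have "(\<lambda>z i. if i \<in> K then z i else False) -` {f} \<inter> space (PiM K (\<lambda>_. count_space UNIV)) = PiE K (\<lambda>i. {f i})"
      using f by (auto simp: space_PiM PiE_dflt_def fun_eq_iff PiE_def extensional_def)
    also have "\<dots> \<in> sets (PiM K (\<lambda>_. count_space UNIV))"
      using assms by (intro sets_PiM_I_finite) auto
    finally show "(\<lambda>z i. if i \<in> K then z i else False) -` {f} \<inter> space (PiM K (\<lambda>_. count_space UNIV)) \<in> sets (PiM K (\<lambda>_. count_space UNIV))" .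
  qed
qed

lemma block_hoeffding:
  fixes D :: "nat set" and Q :: "nat \<Rightarrow> bool pmf" and K :: "nat \<Rightarrow> nat set"
    and Y :: "nat \<Rightarrow> (nat \<Rightarrow> bool) \<Rightarrow> real" and r :: nat and t :: real
  assumes finD: "finite D" and r: "r \<ge> 1"
    and Ksub: "\<And>a. a < r \<Longrightarrow> K a \<subseteq> D"
    and disj: "\<And>a b. a < r \<Longrightarrow> b < r \<Longrightarrow> a \<noteq> b \<Longrightarrow> K a \<inter> K b = {}"
    and Y01: "\<And>a x. a < r \<Longrightarrow> Y a x \<in> {0..1}"
    and loc: "\<And>a x. a < r \<Longrightarrow> Y a x = Y a (\<lambda>i. if i \<in> K a then x i else False)"
    and t: "t \<ge> 0"
  shows "measure_pmf.prob (Pi_pmf D False Q) {x. (\<Sum>a<r. Y a x) \<ge> (\<Sum>a<r. measure_pmf.expectation (Pi_pmf D False Q) (Y a)) + t} \<le> exp (-2 * t^2 / real r)"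
    and "measure_pmf.prob (Pi_pmf D False Q) {x. (\<Sum>a<r. Y a x) \<le> (\<Sum>a<r. measure_pmf.expectation (Pi_pmf D False Q) (Y a)) - t} \<le> exp (-2 * t^2 / real r)"
proof -
  define M where "M = Pi_pmf D False Q"
  interpret P: prob_space "measure_pmf M" by (rule measure_pmf.prob_space_axioms)
  have ind0: "prob_space.indep_vars (measure_pmf M) (\<lambda>_. count_space UNIV) (\<lambda>i f. f i) D"
    unfolding M_def by (rule indep_vars_Pi_pmf[OF finD])
  have ind1: "prob_space.indep_vars (measure_pmf M) (\<lambda>a. PiM (K a) (\<lambda>_. count_space UNIV)) (\<lambda>a \<omega>. restrict (\<lambda>i. \<omega> i) (K a)) {..<r}"
    by (rule prob_space.indep_vars_restrict[OF measure_pmf.prob_space_axioms ind0]) (use Ksub disj in \<open>auto simp: disjoint_family_on_def\<close>)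
  have ind2: "prob_space.indep_vars (measure_pmf M) (\<lambda>_. borel) (\<lambda>a \<omega>. Y a (\<lambda>i. if i \<in> K a then restrict (\<lambda>i. \<omega> i) (K a) i else False)) {..<r}"
  proof (rule prob_space.indep_vars_compose2[OF measure_pmf.prob_space_axioms ind1])
    fix a assume a: "a \<in> {..<r}"
    have fK: "finite (K a)" using Ksub[of a] a finD by (auto intro: finite_subset)
    have "Y a \<in> measurable (count_space (PiE_dflt (K a) False (\<lambda>_. UNIV))) borel" by simp
    hence "Y a \<circ> (\<lambda>z i. if i \<in> K a then z i else False) \<in> measurable (PiM (K a) (\<lambda>_. count_space UNIV)) borel"
      by (rule measurable_comp[OF mask_meas[OF fK]])
    thus "(\<lambda>z. Y a (\<lambda>i. if i \<in> K a then z i else False)) \<in> measurable (PiM (K a) (\<lambda>_. count_space UNIV)) borel"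
      by (simp only: comp_def)
  qed
  have ind: "prob_space.indep_vars (measure_pmf M) (\<lambda>_. borel) Y {..<r}"
  proof -
    have e: "(\<lambda>\<omega>. Y a (\<lambda>i. if i \<in> K a then restrict (\<lambda>i. \<omega> i) (K a) i else False)) = Y a" if "a < r" for a
    proof
      fix \<omega>
      have "(\<lambda>i. if i \<in> K a then restrict (\<lambda>i. \<omega> i) (K a) i else False) = (\<lambda>i. if i \<in> K a then \<omega> i else False)"
        by (auto simp: fun_eq_iff)
      thus "Y a (\<lambda>i. if i \<in> K a then restrict (\<lambda>i. \<omega> i) (K a) i else False) = Y a \<omega>"
        using loc[OF that, of \<omega>] by simp
    qed
    show ?thesis using ind2
      by (rule iffD1[OF prob_space.indep_vars_cong[OF measure_pmf.prob_space_axioms], rotated -1]) (auto simp: e)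
  qed
  interpret H: Hoeffding_ineq "measure_pmf M" "{..<r}" Y "\<lambda>_. 0" "\<lambda>_. 1" "(\<Sum>a<r. measure_pmf.expectation M (Y a))"
  proof unfold_locales
    show "prob_space.indep_vars (measure_pmf M) (\<lambda>_. borel) Y {..<r}" by (rule ind)
  qed (use Y01 in auto)
  have pos: "(\<Sum>i<r. ((\<lambda>_. 1::real) i - (\<lambda>_. 0) i)\<^sup>2) = real r" by simp
  show "measure_pmf.prob (Pi_pmf D False Q) {x. (\<Sum>a<r. Y a x) \<ge> (\<Sum>a<r. measure_pmf.expectation (Pi_pmf D False Q) (Y a)) + t} \<le> exp (-2 * t^2 / real r)"
    using H.Hoeffding_ineq_ge[OF t] r unfolding M_def by simp
  show "measure_pmf.prob (Pi_pmf D False Q) {x. (\<Sum>a<r. Y a x) \<le> (\<Sum>a<r. measure_pmf.expectation (Pi_pmf D False Q) (Y a)) - t} \<le> exp (-2 * t^2 / real r)"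
    using H.Hoeffding_ineq_le[OF t] r unfolding M_def by simp
qed



definition tolist :: "nat \<Rightarrow> (nat \<Rightarrow> bool) \<Rightarrow> bool list" where
  "tolist n f = map f [0..<n]"

lemma length_tolist[simp]: "length (tolist n f) = n" by (simp add: tolist_def)
lemma nth_tolist[simp]: "i < n \<Longrightarrow> tolist n f ! i = f i" by (simp add: tolist_def)

lemma bij_tolist: "bij_betw (tolist n) (PiE_dflt {..<n} False (\<lambda>_. UNIV)) (bitstrings n)"
proof (rule bij_betwI[where g = "\<lambda>xs i. if i < n then xs ! i else False"])
  show "tolist n \<in> PiE_dflt {..<n} False (\<lambda>_. UNIV) \<rightarrow> bitstrings n"
    by (auto simp: bitstrings_def)
  show "(\<lambda>xs i. if i < n then xs ! i else False) \<in> bitstrings n \<rightarrow> PiE_dflt {..<n} False (\<lambda>_. UNIV)"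
    by (auto simp: PiE_dflt_def)
  show "(\<lambda>i. if i < n then tolist n x ! i else False) = x" if "x \<in> PiE_dflt {..<n} False (\<lambda>_. UNIV)" for x
    using that by (auto simp: PiE_dflt_def fun_eq_iff)
  show "tolist n (\<lambda>i. if i < n then y ! i else False) = y" if "y \<in> bitstrings n" for y
    using that by (auto simp: bitstrings_def tolist_def intro: nth_equalityI)
qed

lemma unif_bits_alt:
  "unif_bits m = map_pmf (tolist m) (Pi_pmf {..<m} False (\<lambda>_. bernoulli_pmf (1/2)))"
proof -
  have "Pi_pmf {..<m} False (\<lambda>_. bernoulli_pmf (1/2)) = pmf_of_set (PiE_dflt {..<m} False (\<lambda>_. UNIV))"
    by (simp add: bernoulli_pmf_half_conv_pmf_of_set Pi_pmf_of_set)
  moreover have "map_pmf (tolist m) (pmf_of_set (PiE_dflt {..<m} False (\<lambda>_. UNIV))) = pmf_of_set (bitstrings m)"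
    by (rule map_pmf_of_set_bij_betw[OF bij_tolist]) auto
  ultimately show ?thesis by (simp add: unif_bits_def)
qed

lemma dep_loc:
  assumes "x \<in> bitstrings m" "y \<in> bitstrings m" "\<forall>i\<in>dep_set g m j. x ! i = y ! i"
  shows "g x ! j = g y ! j"
proof -
  define d where "d = card {i. i < m \<and> x ! i \<noteq> y ! i}"
  show ?thesis using assms d_def
  proof (induction d arbitrary: x)
    case 0
    have "finite {i. i < m \<and> x ! i \<noteq> y ! i}" by simp
    hence "{i. i < m \<and> x ! i \<noteq> y ! i} = {}" using 0 by simp
    hence all: "\<forall>i<m. x ! i = y ! i" by blast
    have l: "length x = m" "length y = m" using 0 by (auto simp: bitstrings_def)
    have "x = y" by (rule nth_equalityI) (use all l in auto)
    thus ?case by simp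
  next
    case (Suc d x)
    have "{i. i < m \<and> x ! i \<noteq> y ! i} \<noteq> {}" using Suc.prems(4) by (metis card.empty nat.distinct(1))
    then obtain i where i: "i < m" "x ! i \<noteq> y ! i" by auto
    have ni: "i \<notin> dep_set g m j" using i Suc.prems(3) by auto
    hence "\<not> (\<exists>z\<in>bitstrings m. g z ! j \<noteq> g (z[i := \<not> z ! i]) ! j)"
      using i unfolding dep_set_def by blast
    hence "g x ! j = g (x[i := \<not> x ! i]) ! j"
      using Suc.prems(1) by blast
    define x' where "x' = x[i := \<not> x ! i]"
    have x'b: "x' \<in> bitstrings m" using Suc.prems(1) by (simp add: x'_def bitstrings_def)
    have xl: "length x = m" using Suc.prems(1) by (simp add: bitstrings_def)
    have nth': "x' ! i' = (if i' = i then \<not> x ! i else x ! i')" for i'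
      using i xl by (simp add: x'_def nth_list_update)
    have set: "{i'. i' < m \<and> x' ! i' \<noteq> y ! i'} = {i'. i' < m \<and> x ! i' \<noteq> y ! i'} - {i}"
      using i(2) by (auto simp: nth')
    have "d = card {i'. i' < m \<and> x' ! i' \<noteq> y ! i'}"
      unfolding set using i Suc.prems(4) by (subst card_Diff_singleton) auto
    moreover have "\<forall>i'\<in>dep_set g m j. x' ! i' = y ! i'"
      using Suc.prems(3) ni by (auto simp: nth')
    ultimately have "g x' ! j = g y ! j" using Suc.IH[OF x'b Suc.prems(2)] by simp
    thus ?case using \<open>g x ! j = g (x[i := \<not> x ! i]) ! j\<close> by (simp add: x'_def)
  qed
qed

lemma count_tolist: "count_list (tolist n f) True = card {i\<in>{..<n}. f i}"
proof (induction n)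
  case 0 then show ?case by (simp add: tolist_def)
next
  case (Suc n)
  have "{i\<in>{..<Suc n}. f i} = {i\<in>{..<n}. f i} \<union> (if f n then {n} else {})" by (auto simp: less_Suc_eq)
  hence "card {i\<in>{..<Suc n}. f i} = card {i\<in>{..<n}. f i} + (if f n then 1 else 0)" by auto
  thus ?case using Suc by (simp add: tolist_def)
qed

lemma Dk_bound:
  fixes n k :: nat and \<gamma> :: real and E :: "bool list set"
  assumes g01: "0 < \<gamma>" "\<gamma> < 1" and kn: "k \<le> n"
  shows "measure_pmf.prob (D_weight n k) E \<le>
     measure_pmf.prob (Pi_pmf {..<n} False (\<lambda>_. bernoulli_pmf \<gamma>)) (tolist n -` E) / pmf (binomial_pmf n \<gamma>) k"
proof -
  define \<mu> where "\<mu> = Pi_pmf {..<n} False (\<lambda>_. bernoulli_pmf \<gamma>)"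
  define Wf where "Wf = {f \<in> PiE_dflt {..<n} False (\<lambda>_. UNIV). card {i\<in>{..<n}. f i} = k}"
  define W where "W = {xs \<in> bitstrings n. count_list xs True = k}"
  define c where "c = \<gamma> ^ k * (1 - \<gamma>) ^ (n - k)"
  have cpos: "c > 0" using g01 by (simp add: c_def)
  have finWf: "finite Wf" unfolding Wf_def by (rule finite_subset[of _ "PiE_dflt {..<n} False (\<lambda>_. UNIV)"]) auto
  have bijW: "bij_betw (tolist n) Wf W"
  proof (rule bij_betw_subset[OF bij_tolist[of n]])
    show "Wf \<subseteq> PiE_dflt {..<n} False (\<lambda>_. UNIV)" unfolding Wf_def by auto
    show "tolist n ` Wf = W"
    proof
      show "tolist n ` Wf \<subseteq> W" unfolding Wf_def W_def
        using bij_betw_imp_surj_on[OF bij_tolist[of n]] by (auto simp: count_tolist)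
    next
      show "W \<subseteq> tolist n ` Wf"
      proof
        fix x assume x: "x \<in> W"
        hence "x \<in> tolist n ` PiE_dflt {..<n} False (\<lambda>_. UNIV)"
          using bij_betw_imp_surj_on[OF bij_tolist[of n]] by (simp add: W_def)
        then obtain f where f: "f \<in> PiE_dflt {..<n} False (\<lambda>_. UNIV)" "x = tolist n f" by blast
        have "f \<in> Wf" using f x count_tolist[of n f] by (simp add: Wf_def W_def)
        thus "x \<in> tolist n ` Wf" using f by blast
      qed
    qed
  qed
  have Wne: "Wf \<noteq> {}"
  proof -
    have "{i. i < n \<and> i < k} = {..<k}" using kn by auto
    hence "(\<lambda>i. i < k) \<in> Wf" using kn unfolding Wf_def by (auto simp: PiE_dflt_def)
    thus ?thesis by auto
  qed
  have D: "D_weight n k = map_pmf (tolist n) (pmf_of_set Wf)"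
    unfolding D_weight_def W_def[symmetric] by (rule map_pmf_of_set_bij_betw[OF bijW Wne finWf, symmetric])
  have pmfW: "pmf \<mu> f = c" if "f \<in> Wf" for f
  proof -
    have fo: "\<forall>x. x \<notin> {..<n} \<longrightarrow> f x = False" using that by (auto simp: Wf_def PiE_dflt_def)
    have "pmf \<mu> f = (\<Prod>x\<in>{..<n}. pmf (bernoulli_pmf \<gamma>) (f x))"
      unfolding \<mu>_def by (subst pmf_Pi) (use fo in auto)
    also have "\<dots> = (\<Prod>x\<in>{..<n}. if f x then \<gamma> else 1 - \<gamma>)"
      using g01 by (intro prod.cong) auto
    also have "\<dots> = (\<Prod>x\<in>{..<n} \<inter> {x. f x}. \<gamma>) * (\<Prod>x\<in>{..<n} \<inter> - {x. f x}. 1 - \<gamma>)"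
      by (rule prod.If_cases) simp
    also have "\<dots> = \<gamma> ^ card ({..<n} \<inter> {x. f x}) * (1 - \<gamma>) ^ card ({..<n} \<inter> - {x. f x})" by simp
    also have "card ({..<n} \<inter> {x. f x}) = k" using that by (simp add: Wf_def Int_def conj_commute)
    also have "{..<n} \<inter> - {x. f x} = {..<n} - {i\<in>{..<n}. f i}" by auto
    also have "card \<dots> = n - card {i\<in>{..<n}. f i}" by (subst card_Diff_subset) auto
    also have "card {i\<in>{..<n}. f i} = k" using that by (simp add: Wf_def)
    finally show ?thesis by (simp add: c_def)
  qed
  have mWf: "measure_pmf.prob \<mu> Wf = real (card Wf) * c"
    using finWf by (simp add: measure_measure_pmf_finite pmfW)
  have mA: "measure_pmf.prob \<mu> (tolist n -` E \<inter> Wf) = real (card (Wf \<inter> tolist n -` E)) * c"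
    using finWf by (simp add: measure_measure_pmf_finite pmfW Int_commute)
  have bin: "pmf (binomial_pmf n \<gamma>) k = measure_pmf.prob \<mu> Wf"
  proof -
    have "binomial_pmf n \<gamma> = map_pmf (\<lambda>f. card {x\<in>{..<n}. f x}) \<mu>"
      unfolding \<mu>_def by (rule binomial_pmf_altdef') (use g01 in auto)
    hence "pmf (binomial_pmf n \<gamma>) k = measure_pmf.prob \<mu> {f. card {x\<in>{..<n}. f x} = k}"
      by (simp add: pmf_map vimage_def)
    also have "\<dots> = measure_pmf.prob \<mu> ({f. card {x\<in>{..<n}. f x} = k} \<inter> set_pmf \<mu>)"
      by (simp add: measure_Int_set_pmf)
    also have "{f. card {x\<in>{..<n}. f x} = k} \<inter> set_pmf \<mu> = Wf \<inter> set_pmf \<mu>"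
      using set_Pi_pmf_subset[of "{..<n}" False "\<lambda>_. bernoulli_pmf \<gamma>"]
      unfolding \<mu>_def Wf_def by (auto simp: PiE_dflt_def)
    also have "measure_pmf.prob \<mu> \<dots> = measure_pmf.prob \<mu> Wf" by (simp add: measure_Int_set_pmf)
    finally show ?thesis .
  qed
  have "measure_pmf.prob (D_weight n k) E = real (card (Wf \<inter> tolist n -` E)) / real (card Wf)"
    unfolding D using Wne finWf by (simp add: measure_pmf_of_set)
  also have "\<dots> = measure_pmf.prob \<mu> (tolist n -` E \<inter> Wf) / measure_pmf.prob \<mu> Wf"
    unfolding mA mWf using cpos by simp
  also have "\<dots> \<le> measure_pmf.prob \<mu> (tolist n -` E) / measure_pmf.prob \<mu> Wf"
    by (intro divide_right_mono measure_pmf.finite_measure_mono) auto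
  finally show ?thesis unfolding bin \<mu>_def .
qed



lemma tv_bdd:
  fixes p q :: "'a pmf"
  shows "bdd_above (range (\<lambda>A. \<bar>measure_pmf.prob p A - measure_pmf.prob q A\<bar>))"
  proof (rule bdd_aboveI2[where M=1])
    fix A
    have "measure_pmf.prob p A \<le> 1" "measure_pmf.prob q A \<le> 1" "measure_pmf.prob p A \<ge> 0" "measure_pmf.prob q A \<ge> 0"
      by auto
    thus "\<bar>measure_pmf.prob p A - measure_pmf.prob q A\<bar> \<le> 1" by linarith
  qed

lemma tv_upper:
  fixes p q :: "'a pmf"
  shows "measure_pmf.prob p A - measure_pmf.prob q A \<le> tv_dist p q"
proof -
  note bdd = tv_bdd[of p q]
  have "measure_pmf.prob p A - measure_pmf.prob q A \<le> \<bar>measure_pmf.prob p A - measure_pmf.prob q A\<bar>" by simp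
  also have "\<dots> \<le> tv_dist p q" unfolding tv_dist_def by (rule cSUP_upper[OF _ bdd]) simp
  finally show ?thesis .
qed

lemma tv_witness:
  fixes p q :: "'a pmf"
  assumes "tv_dist p q > e"
  shows "\<exists>A. measure_pmf.prob p A - measure_pmf.prob q A > e"
proof -
  have "\<exists>A. e < \<bar>measure_pmf.prob p A - measure_pmf.prob q A\<bar>"
    using assms tv_bdd[of p q] unfolding tv_dist_def by (subst (asm) less_cSUP_iff) auto
  then obtain A where A: "e < \<bar>measure_pmf.prob p A - measure_pmf.prob q A\<bar>" by blast
  show ?thesis
  proof (cases "measure_pmf.prob p A - measure_pmf.prob q A \<ge> 0")
    case True thus ?thesis using A by auto
  next
    case False
    have "measure_pmf.prob p (- A) = 1 - measure_pmf.prob p A"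
      using measure_pmf.prob_compl[of A p] by (simp add: Compl_eq_Diff_UNIV)
    moreover have "measure_pmf.prob q (- A) = 1 - measure_pmf.prob q A"
      using measure_pmf.prob_compl[of A q] by (simp add: Compl_eq_Diff_UNIV)
    ultimately have "measure_pmf.prob p (- A) - measure_pmf.prob q (- A) = \<bar>measure_pmf.prob p A - measure_pmf.prob q A\<bar>"
      using False by simp
    thus ?thesis using A by metis
  qed
qed

lemma final_arith:
  fixes n :: nat and e :: real
  assumes "n \<ge> 2" "e \<ge> 0"
  shows "1 - e - e * (2 * sqrt (real n)) \<ge> 1 - 2 * sqrt (2 * real n) * e"
proof -
  have s2: "sqrt 2 \<le> 3/2" by (rule real_le_lsqrt) (auto simp: power2_eq_square)
  have s2': "sqrt 2 * sqrt 2 = 2" by simp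
  have sn: "sqrt (real n) \<ge> sqrt 2" using assms by simp
  have "1 \<le> (2 * sqrt 2 - 2) * sqrt 2" using s2 s2' by (simp add: algebra_simps)
  also have "\<dots> \<le> (2 * sqrt 2 - 2) * sqrt (real n)"
  proof (rule mult_left_mono[OF sn])
    have "sqrt 2 \<ge> 1" by simp
    thus "0 \<le> 2 * sqrt 2 - 2" by simp
  qed
  finally have "1 + 2 * sqrt (real n) \<le> 2 * sqrt (2 * real n)"
    by (simp add: real_sqrt_mult algebra_simps)
  hence "e * (1 + 2 * sqrt (real n)) \<le> e * (2 * sqrt (2 * real n))"
    using assms by (intro mult_left_mono) auto
  thus ?thesis by (simp add: algebra_simps)
qed



theorem mainTheorem9:
  fixes g :: "bool list \<Rightarrow> bool list" and m n d k r' :: nat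
    and idx :: "nat \<Rightarrow> nat" and \<gamma> \<epsilon> :: real
  assumes k_ge: "1 \<le> k" and k_le: "real k \<le> real n / 2"
    and gamma_def: "\<gamma> = real k / real n"
    and eps: "0 \<le> \<epsilon>" "\<epsilon> \<le> 1"
    and g_len: "\<forall>x \<in> bitstrings m. length (g x) = n"
    and local: "is_local g m n d"
    and r_pos: "1 \<le> r'"
    and idx_range: "\<forall>a < r'. idx a < n"
    and non_connected: "\<forall>a < r'. \<forall>b < r'. a \<noteq> b \<longrightarrow>
          nbhd_inputs g m n (idx a) \<inter> nbhd_inputs g m n (idx b) = {}"
    and type1: "\<forall>a < r'. tv_dist (marginal (map_pmf g (unif_bits m)) (nbhd g m n (idx a)))
                                  (biased_bits (nbhd g m n (idx a)) \<gamma>) > \<epsilon>"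
  shows "tv_dist (map_pmf g (unif_bits m)) (D_weight n k)
           \<ge> 1 - 2 * sqrt (2 * real n) * exp (- (\<epsilon>^2 * real r') / 2)"
proof -
  define P where "P = map_pmf g (unif_bits m)"
  define N where "N = (\<lambda>a. nbhd g m n (idx a))"
  define J where "J = (\<lambda>a. nbhd_inputs g m n (idx a))"
  define restr where "restr = (\<lambda>T (y::bool list) j. if j \<in> T then y ! j else False)"
  have marg: "marginal Q T = map_pmf (restr T) Q" for Q T
    unfolding marginal_def restr_def by (rule refl)
  define e0 where "e0 = exp (- (\<epsilon>^2 * real r') / 2)"
  have e0pos: "e0 \<ge> 0" by (simp add: e0_def)
  have n2: "n \<ge> 2" and k2n: "2 * k \<le> n" using k_ge k_le by linarith+
  have rp: "real r' > 0" using r_pos by simp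
  have "\<forall>a\<in>{..<r'}. \<exists>A. measure_pmf.prob (marginal P (N a)) A - measure_pmf.prob (biased_bits (N a) \<gamma>) A > \<epsilon>"
    using type1 tv_witness unfolding P_def N_def by blast
  then obtain B where B: "\<And>a. a < r' \<Longrightarrow> measure_pmf.prob (marginal P (N a)) (B a) - measure_pmf.prob (biased_bits (N a) \<gamma>) (B a) > \<epsilon>"
    using bchoice[of "{..<r'}"] by (metis lessThan_iff)
  define p where "p = (\<lambda>a. measure_pmf.prob (marginal P (N a)) (B a))"
  define q where "q = (\<lambda>a. measure_pmf.prob (biased_bits (N a) \<gamma>) (B a))"
  define S where "S = (\<lambda>y. \<Sum>a<r'. indicator (B a) (restr (N a) y) :: real)"
  define t where "t = (\<Sum>a<r'. (p a + q a) / 2)"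
  define E where "E = {y. S y \<ge> t}"
  have gap: "(\<Sum>a<r'. (p a - q a)) \<ge> \<epsilon> * real r'"
  proof -
    have "(\<Sum>a<r'. \<epsilon>) \<le> (\<Sum>a<r'. (p a - q a))"
      by (intro sum_mono) (use B in \<open>auto simp: p_def q_def less_imp_le\<close>)
    thus ?thesis by (simp add: mult.commute)
  qed
  have t1: "t \<le> (\<Sum>a<r'. p a) - \<epsilon> * real r' / 2"
  proof -
    have "t = (\<Sum>a<r'. p a) - (\<Sum>a<r'. (p a - q a)) / 2"
      unfolding t_def by (simp add: sum_divide_distrib[symmetric] sum_subtractf sum.distrib[symmetric] field_simps)
    thus ?thesis using gap by linarith
  qed
  have t2: "t \<ge> (\<Sum>a<r'. q a) + \<epsilon> * real r' / 2"
  proof -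
    have "t = (\<Sum>a<r'. q a) + (\<Sum>a<r'. (p a - q a)) / 2"
      unfolding t_def by (simp add: sum_divide_distrib[symmetric] sum_subtractf sum.distrib[symmetric] field_simps)
    thus ?thesis using gap by linarith
  qed
  have hexp: "exp (-2 * (\<epsilon> * real r' / 2)^2 / real r') = e0"
    unfolding e0_def using rp by (simp add: power2_eq_square field_simps)
  have hpos: "\<epsilon> * real r' / 2 \<ge> 0" using eps by simp
  have dep_sub: "dep_set g m j \<subseteq> {..<m}" for j unfolding dep_set_def by auto
  have dep_J: "dep_set g m j \<subseteq> J a" if "j \<in> N a" for j a
    using that unfolding N_def J_def nbhd_inputs_def by auto
  have N_sub: "N a \<subseteq> {..<n}" for a unfolding N_def nbhd_def by auto
  have J_sub: "J a \<subseteq> {..<m}" for a unfolding J_def nbhd_inputs_def using dep_sub by blast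
  have J_disj: "J a \<inter> J b = {}" if "a < r'" "b < r'" "a \<noteq> b" for a b
    using non_connected that unfolding J_def by blast
  have N_disj: "N a \<inter> N b = {}" if "a < r'" "b < r'" "a \<noteq> b" for a b
  proof (rule ccontr)
    assume "N a \<inter> N b \<noteq> {}"
    then obtain j where j: "j \<in> N a" "j \<in> N b" by blast
    hence "dep_set g m j \<noteq> {}" unfolding N_def nbhd_def by auto
    moreover have "dep_set g m j \<subseteq> J a \<inter> J b" using dep_J j by blast
    ultimately show False using J_disj[OF that] by blast
  qed
  define Pm where "Pm = Pi_pmf {..<m} False (\<lambda>_. bernoulli_pmf (1/2))"
  have P_alt: "P = map_pmf (\<lambda>x. g (tolist m x)) Pm"
    unfolding P_def Pm_def unif_bits_alt by (simp add: map_pmf_comp)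
  define Y where "Y = (\<lambda>a x. indicator {x. restr (N a) (g (tolist m x)) \<in> B a} x :: real)"
  have Y_exp: "measure_pmf.expectation Pm (Y a) = p a" for a
  proof -
    have "measure_pmf.expectation Pm (Y a) = measure_pmf.prob Pm {x. restr (N a) (g (tolist m x)) \<in> B a}"
      unfolding Y_def by simp
    also have "\<dots> = p a"
      unfolding p_def marg P_alt by (simp add: vimage_def)
    finally show ?thesis .
  qed
  have SY: "S (g (tolist m x)) = (\<Sum>a<r'. Y a x)" for x
    unfolding S_def Y_def by (simp add: indicator_def)
  have Y_loc: "Y a x = Y a (\<lambda>i. if i \<in> J a then x i else False)" for a x
  proof -
    define x' where "x' = (\<lambda>i. if i \<in> J a then x i else False)"
    have "restr (N a) (g (tolist m x)) = restr (N a) (g (tolist m x'))"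
    proof
      fix j
      show "restr (N a) (g (tolist m x)) j = restr (N a) (g (tolist m x')) j"
      proof (cases "j \<in> N a")
        case True
        have "g (tolist m x) ! j = g (tolist m x') ! j"
        proof (rule dep_loc[of "tolist m x" m "tolist m x'" g j])
          show "tolist m x \<in> bitstrings m" "tolist m x' \<in> bitstrings m" by (auto simp: bitstrings_def)
          show "\<forall>i\<in>dep_set g m j. tolist m x ! i = tolist m x' ! i"
          proof
            fix i assume i: "i \<in> dep_set g m j"
            hence "i < m" "i \<in> J a" using dep_sub dep_J[OF True] by auto
            thus "tolist m x ! i = tolist m x' ! i" by (simp add: x'_def)
          qed
        qed
        thus ?thesis by (simp add: restr_def)
      qed (simp add: restr_def)
    qed
    thus ?thesis unfolding Y_def x'_def by (simp add: indicator_def)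
  qed
  have PE: "measure_pmf.prob P (- E) \<le> e0"
  proof -
    have "measure_pmf.prob P (- E) = measure_pmf.prob Pm {x. (\<Sum>a<r'. Y a x) < t}"
      unfolding P_alt E_def by (simp add: SY vimage_def not_le)
    also have "\<dots> \<le> measure_pmf.prob Pm {x. (\<Sum>a<r'. Y a x) \<le> (\<Sum>a<r'. measure_pmf.expectation Pm (Y a)) - \<epsilon> * real r' / 2}"
      using t1 by (intro measure_pmf.finite_measure_mono) (auto simp: Y_exp)
    also have "\<dots> \<le> exp (-2 * (\<epsilon> * real r' / 2)^2 / real r')"
      unfolding Pm_def
      by (rule block_hoeffding(2)[where D="{..<m}" and Q="\<lambda>_. bernoulli_pmf (1/2)" and K=J and Y=Y and r=r' and t="\<epsilon> * real r' / 2", OF _ r_pos J_sub J_disj _ Y_loc hpos]) (auto simp: Y_def)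
    finally show ?thesis using hexp by simp
  qed
  have PE': "measure_pmf.prob P E \<ge> 1 - e0"
    using PE measure_pmf.prob_compl[of E P] by (simp add: Compl_eq_Diff_UNIV)
  have g01: "0 < \<gamma>" "\<gamma> < 1"
  proof -
    have a: "real k \<ge> 1" "real k < real n" using k_ge k2n by auto
    show "0 < \<gamma>" unfolding gamma_def using a by simp
    show "\<gamma> < 1" unfolding gamma_def using a by simp
  qed
  define \<mu> where "\<mu> = Pi_pmf {..<n} False (\<lambda>_. bernoulli_pmf \<gamma>)"
  define Z where "Z = (\<lambda>a f. indicator {f. restr (N a) (tolist n f) \<in> B a} f :: real)"
  have restr_tl: "restr (N a) (tolist n f) = (\<lambda>i. if i \<in> N a then f i else False)" for a f
    using N_sub[of a] unfolding restr_def by (auto simp: fun_eq_iff)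
  have Z_exp: "measure_pmf.expectation \<mu> (Z a) = q a" for a
  proof -
    have "measure_pmf.expectation \<mu> (Z a) = measure_pmf.prob \<mu> {f. restr (N a) (tolist n f) \<in> B a}"
      unfolding Z_def by simp
    also have "\<dots> = measure_pmf.prob (map_pmf (\<lambda>f i. if i \<in> N a then f i else False) \<mu>) (B a)"
      by (simp add: restr_tl vimage_def)
    also have "map_pmf (\<lambda>f i. if i \<in> N a then f i else False) \<mu> = biased_bits (N a) \<gamma>"
      unfolding \<mu>_def biased_bits_def by (rule Pi_pmf_subset[symmetric]) (auto simp: N_sub)
    finally show ?thesis by (simp add: q_def)
  qed
  have SZ: "S (tolist n f) = (\<Sum>a<r'. Z a f)" for f
    unfolding S_def Z_def by (simp add: indicator_def)
  have Z_loc: "Z a f = Z a (\<lambda>i. if i \<in> N a then f i else False)" for a f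
    unfolding Z_def restr_tl by (simp add: indicator_def)
  have muE: "measure_pmf.prob \<mu> (tolist n -` E) \<le> e0"
  proof -
    have "measure_pmf.prob \<mu> (tolist n -` E) \<le> measure_pmf.prob \<mu> {f. (\<Sum>a<r'. Z a f) \<ge> (\<Sum>a<r'. measure_pmf.expectation \<mu> (Z a)) + \<epsilon> * real r' / 2}"
    proof (intro measure_pmf.finite_measure_mono subsetI)
      fix f assume "f \<in> tolist n -` E"
      hence "S (tolist n f) \<ge> t" by (simp add: E_def)
      moreover have "(\<Sum>a<r'. measure_pmf.expectation \<mu> (Z a)) = (\<Sum>a<r'. q a)" by (simp add: Z_exp)
      ultimately show "f \<in> {f. (\<Sum>a<r'. Z a f) \<ge> (\<Sum>a<r'. measure_pmf.expectation \<mu> (Z a)) + \<epsilon> * real r' / 2}"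
        using t2 unfolding SZ by simp
    qed simp
    also have "\<dots> \<le> exp (-2 * (\<epsilon> * real r' / 2)^2 / real r')"
      unfolding \<mu>_def
      by (rule block_hoeffding(1)[where D="{..<n}" and Q="\<lambda>_. bernoulli_pmf \<gamma>" and K=N and Y=Z and r=r' and t="\<epsilon> * real r' / 2", OF _ r_pos N_sub N_disj _ Z_loc hpos]) (auto simp: Z_def)
    finally show ?thesis using hexp by simp
  qed
  have pk: "pmf (binomial_pmf n \<gamma>) k \<ge> 1 / (2 * sqrt (real n))"
    unfolding gamma_def by (rule binom_lb[OF k_ge k2n])
  have pkpos: "pmf (binomial_pmf n \<gamma>) k > 0"
  proof -
    have "sqrt (real n) > 0" using n2 by simp
    hence "1 / (2 * sqrt (real n)) > 0" by simp
    thus ?thesis using pk by linarith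
  qed
  have DE: "measure_pmf.prob (D_weight n k) E \<le> e0 * (2 * sqrt (real n))"
  proof -
    have "measure_pmf.prob (D_weight n k) E \<le> measure_pmf.prob \<mu> (tolist n -` E) / pmf (binomial_pmf n \<gamma>) k"
      unfolding \<mu>_def by (rule Dk_bound[OF g01]) (use k2n in simp)
    also have "\<dots> \<le> e0 / pmf (binomial_pmf n \<gamma>) k"
      by (intro divide_right_mono muE) (use pkpos in simp)
    also have "\<dots> \<le> e0 / (1 / (2 * sqrt (real n)))"
      using pk pkpos e0pos n2 by (intro divide_left_mono) auto
    also have "\<dots> = e0 * (2 * sqrt (real n))" by simp
    finally show ?thesis .
  qed
  have "tv_dist P (D_weight n k) \<ge> measure_pmf.prob P E - measure_pmf.prob (D_weight n k) E"
    by (rule tv_upper)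
  moreover have "measure_pmf.prob P E - measure_pmf.prob (D_weight n k) E \<ge> 1 - e0 - e0 * (2 * sqrt (real n))"
    using PE' DE by linarith
  moreover have "1 - e0 - e0 * (2 * sqrt (real n)) \<ge> 1 - 2 * sqrt (2 * real n) * e0"
    by (rule final_arith[OF n2 e0pos])
  ultimately show ?thesis unfolding P_def e0_def by linarith
qed


end
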